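(* Let $a,b,c,d\in K$ with $c\in\Delta(a)$ and $d\in\Delta(b)$. If $(T-b)^{-1}$ is defined at $a$, then $(T-d)^{-1}$ is defined at $c$.
   Context: Let $K$ be a skew field, $K^*=K\setminus\{0\}$, $\sigma\colon K\to K$ a ring endomorphism and $\delta\colon K\to K$ a $\sigma$-derivation. $K[T;\sigma,\delta]$ is the skew polynomial ring with $Ta=\sigma(a)T+\delta(a)$. The $(\sigma,\delta)$-action of $K^*$ on $K$ is ${}^{b}a=\sigma(b)ab^{-1}+\delta(b)b^{-1}$; $\Delta(a)=\{{}^{b}a:b\in K^*\}$. For $P\in K[T;\sigma,\delta]$ and $a\in K$, $P(a)$ is the unique element of $K$ with $P(T)-P(a)\in K[T;\sigma,\delta](T-a)$. For a set $Z$ with a $K^*$-action, the skew product of functions $Z\to K$ is $(f\diamond g)(z)=f({}^{g(z)}z)g(z)$ if $g(z)\neq0$, $0$ otherwise; $f$ is skew invertible if some $g$ satisfies $f\diamond g=g\diamond f=1$. $K(T;\sigma,\delta)$ is the division ring of left fractions of $K[T;\sigma,\delta]$; each $f$ has a unique minimal representation $P(T)^{-1}Q(T)$ with $P$ monic of least degree; $f$ is defined at $a$ if the function $\Delta(a)\to K$, $c\mapsto P(c)$, is skew invertible. *)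

theory Defs
  imports "HOL-Computational_Algebra.Polynomial"
begin

text \<open>Skew polynomials in K[T;sigma,delta] are represented by their (left) coefficient
  sequences, using the type 'a poly only as a container: the polynomial
  with coefficients p_i stands for the sum of p_i T^i (coefficients on the left).\<close>

definition ring_endo :: "('a::division_ring \<Rightarrow> 'a) \<Rightarrow> bool" where
  "ring_endo \<sigma> \<longleftrightarrow> \<sigma> 1 = 1 \<and> (\<forall>x y. \<sigma> (x + y) = \<sigma> x + \<sigma> y)
     \<and> (\<forall>x y. \<sigma> (x * y) = \<sigma> x * \<sigma> y)"

definition sigma_derivation :: "('a::division_ring \<Rightarrow> 'a) \<Rightarrow> ('a \<Rightarrow> 'a) \<Rightarrow> bool" where
  "sigma_derivation \<sigma> \<delta> \<longleftrightarrow> (\<forall>x y. \<delta> (x + y) = \<delta> x + \<delta> y)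
     \<and> (\<forall>x y. \<delta> (x * y) = \<sigma> x * \<delta> y + \<delta> x * y)"

definition lsmult :: "'a::division_ring \<Rightarrow> 'a poly \<Rightarrow> 'a poly" where
  "lsmult a Q = map_poly (\<lambda>x. a * x) Q"

text \<open>T * Q, using T q = sigma(q) T + delta(q).\<close>
definition tmul :: "('a::division_ring \<Rightarrow> 'a) \<Rightarrow> ('a \<Rightarrow> 'a) \<Rightarrow> 'a poly \<Rightarrow> 'a poly" where
  "tmul \<sigma> \<delta> Q = pCons 0 (map_poly \<sigma> Q) + map_poly \<delta> Q"

fun skmult_list :: "('a::division_ring \<Rightarrow> 'a) \<Rightarrow> ('a \<Rightarrow> 'a) \<Rightarrow> 'a list \<Rightarrow> 'a poly \<Rightarrow> 'a poly" where
  "skmult_list \<sigma> \<delta> [] Q = 0"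
| "skmult_list \<sigma> \<delta> (a # as) Q = lsmult a Q + skmult_list \<sigma> \<delta> as (tmul \<sigma> \<delta> Q)"

definition skew_mult :: "('a::division_ring \<Rightarrow> 'a) \<Rightarrow> ('a \<Rightarrow> 'a) \<Rightarrow> 'a poly \<Rightarrow> 'a poly \<Rightarrow> 'a poly" where
  "skew_mult \<sigma> \<delta> P Q = skmult_list \<sigma> \<delta> (coeffs P) Q"

definition T_minus :: "'a::division_ring \<Rightarrow> 'a poly" where
  "T_minus a = [:- a, 1:]"

definition skew_eval :: "('a::division_ring \<Rightarrow> 'a) \<Rightarrow> ('a \<Rightarrow> 'a) \<Rightarrow> 'a poly \<Rightarrow> 'a \<Rightarrow> 'a" where
  "skew_eval \<sigma> \<delta> P a = (THE r. \<exists>Q. P - [:r:] = skew_mult \<sigma> \<delta> Q (T_minus a))"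

definition sd_act :: "('a::division_ring \<Rightarrow> 'a) \<Rightarrow> ('a \<Rightarrow> 'a) \<Rightarrow> 'a \<Rightarrow> 'a \<Rightarrow> 'a" where
  "sd_act \<sigma> \<delta> b a = \<sigma> b * a * inverse b + \<delta> b * inverse b"

definition sd_class :: "('a::division_ring \<Rightarrow> 'a) \<Rightarrow> ('a \<Rightarrow> 'a) \<Rightarrow> 'a \<Rightarrow> 'a set" where
  "sd_class \<sigma> \<delta> a = {sd_act \<sigma> \<delta> b a | b. b \<noteq> 0}"

definition skew_prod :: "('a::division_ring \<Rightarrow> 'a) \<Rightarrow> ('a \<Rightarrow> 'a) \<Rightarrow> ('a \<Rightarrow> 'a) \<Rightarrow> ('a \<Rightarrow> 'a) \<Rightarrow> 'a \<Rightarrow> 'a" where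
  "skew_prod \<sigma> \<delta> f g z = (if g z \<noteq> 0 then f (sd_act \<sigma> \<delta> (g z) z) * g z else 0)"

definition skew_invertible_on :: "('a::division_ring \<Rightarrow> 'a) \<Rightarrow> ('a \<Rightarrow> 'a) \<Rightarrow> 'a set \<Rightarrow> ('a \<Rightarrow> 'a) \<Rightarrow> bool" where
  "skew_invertible_on \<sigma> \<delta> Z f \<longleftrightarrow> (\<exists>g. \<forall>z\<in>Z. skew_prod \<sigma> \<delta> f g z = 1 \<and> skew_prod \<sigma> \<delta> g f z = 1)"

text \<open>Equality of left fractions P^-1 Q = P'^-1 Q' in K(T;sigma,delta) (P, P' nonzero):
  there are U, V with U nonzero, U P = V P' and U Q = V Q'.\<close>
definition frac_eq :: "('a::division_ring \<Rightarrow> 'a) \<Rightarrow> ('a \<Rightarrow> 'a) \<Rightarrow> 'a poly \<Rightarrow> 'a poly \<Rightarrow> 'a poly \<Rightarrow> 'a poly \<Rightarrow> bool" where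
  "frac_eq \<sigma> \<delta> P Q P' Q' \<longleftrightarrow> P \<noteq> 0 \<and> P' \<noteq> 0 \<and>
     (\<exists>U V. U \<noteq> 0 \<and> skew_mult \<sigma> \<delta> U P = skew_mult \<sigma> \<delta> V P' \<and> skew_mult \<sigma> \<delta> U Q = skew_mult \<sigma> \<delta> V Q')"

definition minimal_rep :: "('a::division_ring \<Rightarrow> 'a) \<Rightarrow> ('a \<Rightarrow> 'a) \<Rightarrow> 'a poly \<Rightarrow> 'a poly \<Rightarrow> 'a poly \<Rightarrow> 'a poly \<Rightarrow> bool" where
  "minimal_rep \<sigma> \<delta> P Q P' Q' \<longleftrightarrow> frac_eq \<sigma> \<delta> P Q P' Q' \<and> lead_coeff P' = 1 \<and>
     (\<forall>P'' Q''. frac_eq \<sigma> \<delta> P Q P'' Q'' \<longrightarrow> degree P' \<le> degree P'')"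

definition frac_defined_at :: "('a::division_ring \<Rightarrow> 'a) \<Rightarrow> ('a \<Rightarrow> 'a) \<Rightarrow> 'a poly \<Rightarrow> 'a poly \<Rightarrow> 'a \<Rightarrow> bool" where
  "frac_defined_at \<sigma> \<delta> P Q a \<longleftrightarrow> (\<exists>P' Q'. minimal_rep \<sigma> \<delta> P Q P' Q' \<and>
     skew_invertible_on \<sigma> \<delta> (sd_class \<sigma> \<delta> a) (\<lambda>c. skew_eval \<sigma> \<delta> P' c))"

end

theory Submission
  imports Defs
begin

lemma endo_facts:
  assumes "ring_endo \<sigma>"
  shows "\<sigma> 0 = 0" "\<sigma> (x + y) = \<sigma> x + \<sigma> y" "\<sigma> (x * y) = \<sigma> x * \<sigma> y" "\<sigma> 1 = 1"
    "\<sigma> (- x) = - \<sigma> x" "\<sigma> (x - y) = \<sigma> x - \<sigma> y"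
proof -
  show add: "\<sigma> (x + y) = \<sigma> x + \<sigma> y" for x y using assms unfolding ring_endo_def by blast
  show "\<sigma> (x * y) = \<sigma> x * \<sigma> y" using assms unfolding ring_endo_def by blast
  show "\<sigma> 1 = 1" using assms unfolding ring_endo_def by blast
  have "\<sigma> (0 + 0) = \<sigma> 0 + \<sigma> 0" by (rule add)
  thus z: "\<sigma> 0 = 0" by simp
  have "\<sigma> x + \<sigma> (- x) = 0" for x using add[of x "- x"] z by simp
  hence n: "\<sigma> (- x) = - \<sigma> x" for x by (rule minus_unique[symmetric])
  show "\<sigma> (- x) = - \<sigma> x" by (rule n)
  show "\<sigma> (x - y) = \<sigma> x - \<sigma> y" using add[of x "- y"] n[of y] by simp
qed

lemma endo_nz:
  assumes "ring_endo \<sigma>" "x \<noteq> 0"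
  shows "\<sigma> x \<noteq> 0"
proof
  assume "\<sigma> x = 0"
  hence "\<sigma> (x * inverse x) = 0" using endo_facts(3)[OF assms(1)] by simp
  thus False using assms endo_facts(4)[OF assms(1)] by simp
qed

lemma endo_inv:
  assumes "ring_endo \<sigma>" "x \<noteq> 0"
  shows "\<sigma> (inverse x) = inverse (\<sigma> x)"
proof -
  have "\<sigma> x * \<sigma> (inverse x) = 1"
    using endo_facts(3,4)[OF assms(1)] assms(2) by (metis right_inverse)
  thus ?thesis using endo_nz[OF assms] by (metis inverse_unique)
qed

lemma der_facts:
  assumes "ring_endo \<sigma>" "sigma_derivation \<sigma> \<delta>"
  shows "\<delta> 0 = 0" "\<delta> (x + y) = \<delta> x + \<delta> y" "\<delta> (x * y) = \<sigma> x * \<delta> y + \<delta> x * y"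
    "\<delta> (- x) = - \<delta> x" "\<delta> (x - y) = \<delta> x - \<delta> y" "\<delta> 1 = 0"
proof -
  show add: "\<delta> (x + y) = \<delta> x + \<delta> y" for x y using assms unfolding sigma_derivation_def by blast
  show m: "\<delta> (x * y) = \<sigma> x * \<delta> y + \<delta> x * y" for x y using assms unfolding sigma_derivation_def by blast
  have "\<delta> (0 + 0) = \<delta> 0 + \<delta> 0" by (rule add)
  thus z: "\<delta> 0 = 0" by simp
  have "\<delta> x + \<delta> (- x) = 0" for x using add[of x "- x"] z by simp
  hence n: "\<delta> (- x) = - \<delta> x" for x by (rule minus_unique[symmetric])
  show "\<delta> (- x) = - \<delta> x" by (rule n)
  show "\<delta> (x - y) = \<delta> x - \<delta> y" using add[of x "- y"] n[of y] by simp
  have "\<delta> (1 * 1) = \<sigma> 1 * \<delta> 1 + \<delta> 1 * 1" by (rule m)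
  thus "\<delta> 1 = 0" using endo_facts(4)[OF assms(1)] by simp
qed

section \<open>Skew multiplication as a sum\<close>

lemma lsmult_coeff [simp]: "coeff (lsmult a Q) k = a * coeff Q k"
  unfolding lsmult_def by (simp add: coeff_map_poly)

lemma lsmult_0 [simp]: "lsmult 0 Q = 0"
  by (simp add: poly_eq_iff)

lemma skmult_list_sum:
  "skmult_list \<sigma> \<delta> xs Q = (\<Sum>i<length xs. lsmult (xs!i) ((tmul \<sigma> \<delta> ^^ i) Q))"
proof (induction xs arbitrary: Q)
  case Nil
  then show ?case by simp
next
  case (Cons a as)
  show ?case
    unfolding length_Cons sum.lessThan_Suc_shift
    by (simp add: Cons funpow_Suc_right del: funpow.simps)
qed

lemma skew_mult_sum:
  assumes "length (coeffs P) \<le> N"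
  shows "skew_mult \<sigma> \<delta> P Q = (\<Sum>i<N. lsmult (coeff P i) ((tmul \<sigma> \<delta> ^^ i) Q))"
proof -
  have "skew_mult \<sigma> \<delta> P Q = (\<Sum>i<length (coeffs P). lsmult (coeff P i) ((tmul \<sigma> \<delta> ^^ i) Q))"
    unfolding skew_mult_def skmult_list_sum
    by (rule sum.cong) (auto simp: nth_default_coeffs_eq[symmetric] nth_default_def)
  also have "\<dots> = (\<Sum>i<N. lsmult (coeff P i) ((tmul \<sigma> \<delta> ^^ i) Q))"
  proof (rule sum.mono_neutral_left)
    show "\<forall>i\<in>{..<N} - {..<length (coeffs P)}. lsmult (coeff P i) ((tmul \<sigma> \<delta> ^^ i) Q) = 0"
      by (auto simp: nth_default_coeffs_eq[symmetric] nth_default_def)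
  qed (use assms in auto)
  finally show ?thesis .
qed

lemma skew_mult_left_diff:
  "skew_mult \<sigma> \<delta> (P1 - P2) Q = skew_mult \<sigma> \<delta> P1 Q - skew_mult \<sigma> \<delta> P2 Q"
proof -
  define N where "N = length (coeffs P1) + length (coeffs P2) + length (coeffs (P1 - P2))"
  have "skew_mult \<sigma> \<delta> (P1 - P2) Q = (\<Sum>i<N. lsmult (coeff (P1 - P2) i) ((tmul \<sigma> \<delta> ^^ i) Q))"
    by (rule skew_mult_sum) (simp add: N_def)
  also have "\<dots> = (\<Sum>i<N. lsmult (coeff P1 i) ((tmul \<sigma> \<delta> ^^ i) Q) - lsmult (coeff P2 i) ((tmul \<sigma> \<delta> ^^ i) Q))"
    by (rule sum.cong) (auto simp: poly_eq_iff algebra_simps)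
  also have "\<dots> = skew_mult \<sigma> \<delta> P1 Q - skew_mult \<sigma> \<delta> P2 Q"
    by (simp add: sum_subtractf skew_mult_sum[of P1 N] skew_mult_sum[of P2 N] N_def)
  finally show ?thesis .
qed

lemma skew_mult_0_left [simp]: "skew_mult \<sigma> \<delta> 0 Q = 0"
  by (simp add: skew_mult_def)

lemma skew_mult_1_left [simp]: "skew_mult \<sigma> \<delta> [:1:] Q = Q"
  by (simp add: skew_mult_def poly_eq_iff)

lemma coeff_tmul_0:
  assumes "ring_endo \<sigma>" "sigma_derivation \<sigma> \<delta>"
  shows "coeff (tmul \<sigma> \<delta> Q) 0 = \<delta> (coeff Q 0)"
  unfolding tmul_def using endo_facts(1)[OF assms(1)] der_facts(1)[OF assms]
  by (simp add: coeff_map_poly)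

lemma coeff_tmul_Suc:
  assumes "ring_endo \<sigma>" "sigma_derivation \<sigma> \<delta>"
  shows "coeff (tmul \<sigma> \<delta> Q) (Suc n) = \<sigma> (coeff Q n) + \<delta> (coeff Q (Suc n))"
  unfolding tmul_def using endo_facts(1)[OF assms(1)] der_facts(1)[OF assms]
  by (simp add: coeff_map_poly)

lemma tmul_diff:
  assumes "ring_endo \<sigma>" "sigma_derivation \<sigma> \<delta>"
  shows "tmul \<sigma> \<delta> (Q1 - Q2) = tmul \<sigma> \<delta> Q1 - tmul \<sigma> \<delta> Q2"
proof (rule poly_eqI)
  fix k show "coeff (tmul \<sigma> \<delta> (Q1 - Q2)) k = coeff (tmul \<sigma> \<delta> Q1 - tmul \<sigma> \<delta> Q2) k"
    by (cases k) (simp_all add: coeff_tmul_0[OF assms] coeff_tmul_Suc[OF assms]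
        endo_facts(6)[OF assms(1)] der_facts(5)[OF assms])
qed

lemma tmul_pow_diff:
  assumes "ring_endo \<sigma>" "sigma_derivation \<sigma> \<delta>"
  shows "(tmul \<sigma> \<delta> ^^ i) (Q1 - Q2) = (tmul \<sigma> \<delta> ^^ i) Q1 - (tmul \<sigma> \<delta> ^^ i) Q2"
  by (induction i) (simp_all add: tmul_diff[OF assms])

lemma skew_mult_right_diff:
  assumes "ring_endo \<sigma>" "sigma_derivation \<sigma> \<delta>"
  shows "skew_mult \<sigma> \<delta> P (Q1 - Q2) = skew_mult \<sigma> \<delta> P Q1 - skew_mult \<sigma> \<delta> P Q2"
proof -
  define N where "N = length (coeffs P)"
  have "skew_mult \<sigma> \<delta> P (Q1 - Q2) = (\<Sum>i<N. lsmult (coeff P i) ((tmul \<sigma> \<delta> ^^ i) (Q1 - Q2)))"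
    by (rule skew_mult_sum) (simp add: N_def)
  also have "\<dots> = (\<Sum>i<N. lsmult (coeff P i) ((tmul \<sigma> \<delta> ^^ i) Q1) - lsmult (coeff P i) ((tmul \<sigma> \<delta> ^^ i) Q2))"
    by (rule sum.cong) (auto simp: poly_eq_iff algebra_simps tmul_pow_diff[OF assms])
  also have "\<dots> = skew_mult \<sigma> \<delta> P Q1 - skew_mult \<sigma> \<delta> P Q2"
    by (simp add: sum_subtractf skew_mult_sum[of P N] N_def)
  finally show ?thesis .
qed

lemma skew_mult_0_right [simp]:
  assumes "ring_endo \<sigma>" "sigma_derivation \<sigma> \<delta>"
  shows "skew_mult \<sigma> \<delta> P 0 = 0"
  using skew_mult_right_diff[OF assms, of P 0 0] by simp

lemma tmul_pow_coeff:
  assumes "ring_endo \<sigma>" "sigma_derivation \<sigma> \<delta>" "Q \<noteq> 0"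
  shows "(\<forall>k > degree Q + i. coeff ((tmul \<sigma> \<delta> ^^ i) Q) k = 0) \<and>
         coeff ((tmul \<sigma> \<delta> ^^ i) Q) (degree Q + i) = (\<sigma> ^^ i) (lead_coeff Q)"
proof (induction i)
  case 0
  then show ?case by (simp add: coeff_eq_0)
next
  case (Suc i)
  let ?X = "(tmul \<sigma> \<delta> ^^ i) Q"
  have A: "\<forall>k > degree Q + Suc i. coeff (tmul \<sigma> \<delta> ?X) k = 0"
  proof (intro allI impI)
    fix k assume k: "k > degree Q + Suc i"
    then obtain n where n: "k = Suc n" by (cases k) auto
    show "coeff (tmul \<sigma> \<delta> ?X) k = 0"
      using Suc k n by (simp add: coeff_tmul_Suc[OF assms(1,2)] endo_facts(1)[OF assms(1)] der_facts(1)[OF assms(1,2)])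
  qed
  have B: "coeff (tmul \<sigma> \<delta> ?X) (degree Q + Suc i) = \<sigma> ((\<sigma> ^^ i) (lead_coeff Q))"
    using Suc by (simp add: coeff_tmul_Suc[OF assms(1,2)] der_facts(1)[OF assms(1,2)])
  show ?case using A B by simp
qed

lemma sigma_pow_nz:
  assumes "ring_endo \<sigma>" "x \<noteq> 0"
  shows "(\<sigma> ^^ i) x \<noteq> 0"
  by (induction i) (simp_all add: assms endo_nz[OF assms(1)])

lemma skew_mult_coeff:
  assumes "length (coeffs P) \<le> N"
  shows "coeff (skew_mult \<sigma> \<delta> P Q) k = (\<Sum>i<N. coeff P i * coeff ((tmul \<sigma> \<delta> ^^ i) Q) k)"
  by (simp add: skew_mult_sum[OF assms] coeff_sum)

lemma skew_mult_degree:
  assumes "ring_endo \<sigma>" "sigma_derivation \<sigma> \<delta>" "P \<noteq> 0" "Q \<noteq> 0"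
  shows "skew_mult \<sigma> \<delta> P Q \<noteq> 0 \<and> degree (skew_mult \<sigma> \<delta> P Q) = degree P + degree Q"
proof -
  define N where "N = length (coeffs P)"
  have N: "N = Suc (degree P)" using assms(3) by (simp add: N_def length_coeffs_degree)
  have hi: "coeff (skew_mult \<sigma> \<delta> P Q) k = 0" if k: "k > degree P + degree Q" for k
  proof -
    have "coeff (skew_mult \<sigma> \<delta> P Q) k = (\<Sum>i<N. coeff P i * coeff ((tmul \<sigma> \<delta> ^^ i) Q) k)"
      by (rule skew_mult_coeff) (simp add: N_def)
    also have "\<dots> = 0"
    proof (rule sum.neutral, intro ballI)
      fix i assume "i \<in> {..<N}"
      hence "i \<le> degree P" using N by auto
      hence "k > degree Q + i" using k by simp
      thus "coeff P i * coeff ((tmul \<sigma> \<delta> ^^ i) Q) k = 0"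
        using tmul_pow_coeff[OF assms(1,2,4), of i] by simp
    qed
    finally show ?thesis .
  qed
  have top: "coeff (skew_mult \<sigma> \<delta> P Q) (degree P + degree Q) = lead_coeff P * (\<sigma> ^^ degree P) (lead_coeff Q)"
  proof -
    have "coeff (skew_mult \<sigma> \<delta> P Q) (degree P + degree Q)
        = (\<Sum>i<N. coeff P i * coeff ((tmul \<sigma> \<delta> ^^ i) Q) (degree P + degree Q))"
      by (rule skew_mult_coeff) (simp add: N_def)
    also have "\<dots> = (\<Sum>i\<in>{degree P}. coeff P i * coeff ((tmul \<sigma> \<delta> ^^ i) Q) (degree P + degree Q))"
    proof (rule sum.mono_neutral_right)
      show "\<forall>i\<in>{..<N} - {degree P}. coeff P i * coeff ((tmul \<sigma> \<delta> ^^ i) Q) (degree P + degree Q) = 0"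
      proof
        fix i assume i: "i \<in> {..<N} - {degree P}"
        hence "i < degree P" using N by auto
        hence "degree P + degree Q > degree Q + i" by simp
        thus "coeff P i * coeff ((tmul \<sigma> \<delta> ^^ i) Q) (degree P + degree Q) = 0"
          using tmul_pow_coeff[OF assms(1,2,4), of i] by simp
      qed
    qed (use N in auto)
    also have "\<dots> = lead_coeff P * (\<sigma> ^^ degree P) (lead_coeff Q)"
      using tmul_pow_coeff[OF assms(1,2,4), of "degree P"] by (simp add: add.commute)
    finally show ?thesis .
  qed
  have nz: "lead_coeff P * (\<sigma> ^^ degree P) (lead_coeff Q) \<noteq> 0"
    using assms sigma_pow_nz[OF assms(1)] by simp
  have d1: "degree (skew_mult \<sigma> \<delta> P Q) \<le> degree P + degree Q"
    using hi by (intro degree_le) auto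
  have d2: "degree P + degree Q \<le> degree (skew_mult \<sigma> \<delta> P Q)"
    using top nz by (intro le_degree) simp
  have "skew_mult \<sigma> \<delta> P Q \<noteq> 0" using top nz by auto
  with d1 d2 show ?thesis by simp
qed

lemma tmul_monom1:
  assumes "ring_endo \<sigma>" "sigma_derivation \<sigma> \<delta>"
  shows "tmul \<sigma> \<delta> (monom 1 i) = monom 1 (Suc i)"
proof (rule poly_eqI)
  fix k show "coeff (tmul \<sigma> \<delta> (monom 1 i)) k = coeff (monom 1 (Suc i)) k"
    by (cases k) (auto simp: coeff_tmul_0[OF assms] coeff_tmul_Suc[OF assms] coeff_monom
        endo_facts(1,4)[OF assms(1)] der_facts(1,6)[OF assms])
qed

lemma tmul_pow_one:
  assumes "ring_endo \<sigma>" "sigma_derivation \<sigma> \<delta>"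
  shows "(tmul \<sigma> \<delta> ^^ i) [:1:] = monom 1 i"
proof (induction i)
  case 0 then show ?case by (simp add: monom_0)
next
  case (Suc i) then show ?case by (simp add: tmul_monom1[OF assms])
qed

lemma skew_mult_right_one:
  assumes "ring_endo \<sigma>" "sigma_derivation \<sigma> \<delta>"
  shows "skew_mult \<sigma> \<delta> P [:1:] = P"
proof (cases "P = 0")
  case True then show ?thesis by simp
next
  case False
  have "skew_mult \<sigma> \<delta> P [:1:] = (\<Sum>i<Suc (degree P). lsmult (coeff P i) ((tmul \<sigma> \<delta> ^^ i) [:1:]))"
    by (rule skew_mult_sum) (simp add: False length_coeffs_degree)
  also have "\<dots> = (\<Sum>i\<le>degree P. monom (coeff P i) i)"
    unfolding lessThan_Suc_atMost
    by (rule sum.cong) (auto simp: tmul_pow_one[OF assms] poly_eq_iff coeff_monom)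
  also have "\<dots> = P" by (rule poly_as_sum_of_monoms)
  finally show ?thesis .
qed

lemma degree_T_minus [simp]: "degree (T_minus b) = 1" and T_minus_nz [simp]: "T_minus b \<noteq> 0"
  by (simp_all add: T_minus_def)

lemma skew_eval_T_minus:
  assumes "ring_endo \<sigma>" "sigma_derivation \<sigma> \<delta>"
  shows "skew_eval \<sigma> \<delta> (T_minus b) z = z - b"
  unfolding skew_eval_def
proof (rule the_equality)
  show "\<exists>Q. T_minus b - [:z - b:] = skew_mult \<sigma> \<delta> Q (T_minus z)"
  proof -
    have "T_minus b - [:z - b:] = skew_mult \<sigma> \<delta> [:1:] (T_minus z)" by (simp add: T_minus_def)
    thus ?thesis by blast
  qed
next
  fix r assume "\<exists>Q. T_minus b - [:r:] = skew_mult \<sigma> \<delta> Q (T_minus z)"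
  then obtain Q where Q: "T_minus b - [:r:] = skew_mult \<sigma> \<delta> Q (T_minus z)" by blast
  have "skew_mult \<sigma> \<delta> (Q - [:1:]) (T_minus z) = (T_minus b - [:r:]) - (T_minus b - [:z - b:])"
    unfolding skew_mult_left_diff Q[symmetric] skew_mult_1_left by (simp add: T_minus_def)
  also have "\<dots> = [:z - b - r:]" by (simp add: T_minus_def)
  finally have eq: "skew_mult \<sigma> \<delta> (Q - [:1:]) (T_minus z) = [:z - b - r:]" .
  have "Q = [:1:]"
  proof (rule ccontr)
    assume "Q \<noteq> [:1:]"
    hence "degree (skew_mult \<sigma> \<delta> (Q - [:1:]) (T_minus z)) = degree (Q - [:1:]) + 1"
      using skew_mult_degree[OF assms, of "Q - [:1:]" "T_minus z"] by simp
    thus False using eq by simp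
  qed
  with eq show "r = z - b" by simp
qed

lemma frac_eq_deg:
  assumes "ring_endo \<sigma>" "sigma_derivation \<sigma> \<delta>"
    and "frac_eq \<sigma> \<delta> (T_minus b) [:1:] P Q"
  shows "Q \<noteq> 0 \<and> degree P = degree Q + 1"
proof -
  obtain U V where P: "P \<noteq> 0" and U: "U \<noteq> 0"
    and e1: "skew_mult \<sigma> \<delta> U (T_minus b) = skew_mult \<sigma> \<delta> V P"
    and e2: "skew_mult \<sigma> \<delta> U [:1:] = skew_mult \<sigma> \<delta> V Q"
    using assms(3) unfolding frac_eq_def by blast
  have A: "skew_mult \<sigma> \<delta> U (T_minus b) \<noteq> 0 \<and> degree (skew_mult \<sigma> \<delta> U (T_minus b)) = degree U + 1"
    using skew_mult_degree[OF assms(1,2) U, of "T_minus b"] by simp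
  have V: "V \<noteq> 0" using A e1 by auto
  have Q: "Q \<noteq> 0" using e2 U V skew_mult_right_one[OF assms(1,2)] skew_mult_0_right[OF assms(1,2)] by auto
  have "degree V + degree P = degree U + 1" using A e1 skew_mult_degree[OF assms(1,2) V P] by simp
  moreover have "degree V + degree Q = degree U"
    using e2 skew_mult_degree[OF assms(1,2) V Q] skew_mult_right_one[OF assms(1,2)] by simp
  ultimately show ?thesis using Q by simp
qed

lemma minimal_rep_self:
  assumes "ring_endo \<sigma>" "sigma_derivation \<sigma> \<delta>"
  shows "minimal_rep \<sigma> \<delta> (T_minus d) [:1:] (T_minus d) [:1:]"
  unfolding minimal_rep_def
proof (intro conjI allI impI)
  show "frac_eq \<sigma> \<delta> (T_minus d) [:1:] (T_minus d) [:1:]"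
    unfolding frac_eq_def by (intro conjI exI[of _ "[:1:]"]) simp_all
  show "lead_coeff (T_minus d) = 1" by (simp add: T_minus_def)
  fix P'' Q'' assume "frac_eq \<sigma> \<delta> (T_minus d) [:1:] P'' Q''"
  thus "degree (T_minus d) \<le> degree P''" using frac_eq_deg[OF assms] by fastforce
qed

lemma minimal_rep_unique:
  assumes "ring_endo \<sigma>" "sigma_derivation \<sigma> \<delta>"
    and "minimal_rep \<sigma> \<delta> (T_minus b) [:1:] P Q"
  shows "P = T_minus b"
proof -
  have fe: "frac_eq \<sigma> \<delta> (T_minus b) [:1:] P Q" and lc: "lead_coeff P = 1"
    and mn: "degree P \<le> degree (T_minus b)"
    using assms(3) minimal_rep_self[OF assms(1,2), of b] unfolding minimal_rep_def by blast+
  have dq: "Q \<noteq> 0 \<and> degree P = degree Q + 1" by (rule frac_eq_deg[OF assms(1,2) fe])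
  hence dP: "degree P = 1" and dQ: "degree Q = 0" using mn by simp_all
  define e where "e = - coeff P 0"
  have P01: "P = [:coeff P 0, 1:]"
  proof (rule poly_eqI)
    fix n show "coeff P n = coeff [:coeff P 0, 1:] n"
    proof (cases n)
      case 0 thus ?thesis by simp
    next
      case (Suc m) thus ?thesis using dP lc by (cases m) (auto simp: coeff_eq_0)
    qed
  qed
  have Pe: "P = T_minus e" using P01 by (simp add: T_minus_def e_def)
  obtain q where Qq: "Q = [:q:]" using dQ by (metis degree_eq_zeroE)
  have q: "q \<noteq> 0" using dq Qq by simp
  obtain U V where U: "U \<noteq> 0"
    and e1: "skew_mult \<sigma> \<delta> U (T_minus b) = skew_mult \<sigma> \<delta> V (T_minus e)"
    and e2: "skew_mult \<sigma> \<delta> U [:1:] = skew_mult \<sigma> \<delta> V [:q:]"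
    using fe unfolding frac_eq_def Pe Qq by blast
  have e2': "U = skew_mult \<sigma> \<delta> V [:q:]" using e2 skew_mult_right_one[OF assms(1,2)] by simp
  have V: "V \<noteq> 0" using U e2' by auto
  show ?thesis
  proof (rule ccontr)
    assume "P \<noteq> T_minus b"
    hence be: "b - e \<noteq> 0" using Pe by auto
    have "skew_mult \<sigma> \<delta> (U - V) (T_minus b) = skew_mult \<sigma> \<delta> V (T_minus e - T_minus b)"
      by (simp add: skew_mult_left_diff skew_mult_right_diff[OF assms(1,2)] e1)
    also have "T_minus e - T_minus b = [:b - e:]" by (simp add: T_minus_def)
    finally have eq: "skew_mult \<sigma> \<delta> (U - V) (T_minus b) = skew_mult \<sigma> \<delta> V [:b - e:]" .
    have R: "skew_mult \<sigma> \<delta> V [:b - e:] \<noteq> 0 \<and> degree (skew_mult \<sigma> \<delta> V [:b - e:]) = degree V"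
      using skew_mult_degree[OF assms(1,2) V, of "[:b - e:]"] be by simp
    hence UV: "U - V \<noteq> 0" using eq by auto
    hence "degree (U - V) + 1 = degree V"
      using R eq skew_mult_degree[OF assms(1,2) UV, of "T_minus b"] by simp
    moreover have "U - V = skew_mult \<sigma> \<delta> V [:q - 1:]"
    proof -
      have "U - V = skew_mult \<sigma> \<delta> V [:q:] - skew_mult \<sigma> \<delta> V [:1:]"
        using e2' skew_mult_right_one[OF assms(1,2)] by simp
      also have "\<dots> = skew_mult \<sigma> \<delta> V ([:q:] - [:1:])"
        by (rule skew_mult_right_diff[OF assms(1,2), symmetric])
      also have "[:q:] - [:1:] = [:q - 1:]" by simp
      finally show ?thesis .
    qed
    moreover have "q - 1 \<noteq> 0" using UV calculation(2) skew_mult_0_right[OF assms(1,2)] by auto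
    ultimately show False using skew_mult_degree[OF assms(1,2) V, of "[:q - 1:]"] by simp
  qed
qed

section \<open>The (sigma,delta)-action\<close>

lemma inv_cancel_left: "(j::'a::division_ring) \<noteq> 0 \<Longrightarrow> j * (inverse j * x) = x"
  by (simp add: mult.assoc[symmetric])

lemma act_mul:
  assumes "x \<noteq> 0"
  shows "sd_act \<sigma> \<delta> x z * x = \<sigma> x * z + \<delta> x"
  using assms by (simp add: sd_act_def algebra_simps)

lemma act_comp:
  assumes "ring_endo \<sigma>" "sigma_derivation \<sigma> \<delta>" "k \<noteq> 0" "j \<noteq> 0"
  shows "sd_act \<sigma> \<delta> k (sd_act \<sigma> \<delta> j z) = sd_act \<sigma> \<delta> (k * j) z"
  using assms
  by (simp add: sd_act_def endo_facts(3)[OF assms(1)] der_facts(3)[OF assms(1,2)]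
      nonzero_inverse_mult_distrib algebra_simps inv_cancel_left)

lemma act_one:
  assumes "ring_endo \<sigma>" "sigma_derivation \<sigma> \<delta>"
  shows "sd_act \<sigma> \<delta> 1 z = z"
  by (simp add: sd_act_def endo_facts(4)[OF assms(1)] der_facts(6)[OF assms])

lemma class_closed:
  assumes "ring_endo \<sigma>" "sigma_derivation \<sigma> \<delta>" "w \<in> sd_class \<sigma> \<delta> a" "k \<noteq> 0"
  shows "sd_act \<sigma> \<delta> k w \<in> sd_class \<sigma> \<delta> a"
proof -
  obtain j where j: "j \<noteq> 0" "w = sd_act \<sigma> \<delta> j a" using assms(3) unfolding sd_class_def by blast
  have "sd_act \<sigma> \<delta> k w = sd_act \<sigma> \<delta> (k * j) a" using act_comp[OF assms(1,2,4) j(1)] j by simp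
  moreover have "k * j \<noteq> 0" using assms(4) j(1) by simp
  ultimately show ?thesis unfolding sd_class_def by blast
qed

lemma class_sub:
  assumes "ring_endo \<sigma>" "sigma_derivation \<sigma> \<delta>" "c \<in> sd_class \<sigma> \<delta> a"
  shows "sd_class \<sigma> \<delta> c \<subseteq> sd_class \<sigma> \<delta> a"
  using class_closed[OF assms(1,2,3)] unfolding sd_class_def by blast

lemma key_identity:
  assumes "ring_endo \<sigma>" "sigma_derivation \<sigma> \<delta>" "h \<noteq> 0" "m \<noteq> 0"
  shows "(sd_act \<sigma> \<delta> (h * m) z - sd_act \<sigma> \<delta> h b) * (h * m) = \<sigma> h * ((sd_act \<sigma> \<delta> m z - b) * m)"
proof -
  have hm: "h * m \<noteq> 0" using assms by simp
  have "(sd_act \<sigma> \<delta> (h * m) z - sd_act \<sigma> \<delta> h b) * (h * m)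
      = sd_act \<sigma> \<delta> (h * m) z * (h * m) - (sd_act \<sigma> \<delta> h b * h) * m"
    by (simp add: algebra_simps)
  also have "\<dots> = (\<sigma> h * \<sigma> m * z + (\<sigma> h * \<delta> m + \<delta> h * m)) - (\<sigma> h * b + \<delta> h) * m"
    using act_mul[OF hm] act_mul[OF assms(3)]
    by (simp add: endo_facts(3)[OF assms(1)] der_facts(3)[OF assms(1,2)])
  also have "\<dots> = \<sigma> h * ((\<sigma> m * z + \<delta> m) - b * m)" by (simp add: algebra_simps)
  also have "\<dots> = \<sigma> h * ((sd_act \<sigma> \<delta> m z - b) * m)"
    using act_mul[OF assms(4)] by (simp add: algebra_simps)
  finally show ?thesis .
qed

lemma transfer_invertible:
  assumes en: "ring_endo \<sigma>" and de: "sigma_derivation \<sigma> \<delta>"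
    and c: "c \<in> sd_class \<sigma> \<delta> a" and h: "h \<noteq> 0"
    and inv: "skew_invertible_on \<sigma> \<delta> (sd_class \<sigma> \<delta> a) (\<lambda>z. z - b)"
  shows "skew_invertible_on \<sigma> \<delta> (sd_class \<sigma> \<delta> c) (\<lambda>z. z - sd_act \<sigma> \<delta> h b)"
proof -
  define d where "d = sd_act \<sigma> \<delta> h b"
  define s where "s = \<sigma> h"
  have s: "s \<noteq> 0" using endo_nz[OF en h] by (simp add: s_def)
  obtain g where g: "\<And>z. z \<in> sd_class \<sigma> \<delta> a \<Longrightarrow>
      skew_prod \<sigma> \<delta> (\<lambda>z. z - b) g z = 1 \<and> skew_prod \<sigma> \<delta> g (\<lambda>z. z - b) z = 1"
    using inv unfolding skew_invertible_on_def by blast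
  define g' where "g' w = h * g (sd_act \<sigma> \<delta> (inverse s) w) * inverse s" for w
  have B: "skew_prod \<sigma> \<delta> (\<lambda>z. z - d) g' w = 1" if w: "w \<in> sd_class \<sigma> \<delta> a" for w
  proof -
    define v where "v = sd_act \<sigma> \<delta> (inverse s) w"
    have v: "v \<in> sd_class \<sigma> \<delta> a" unfolding v_def using class_closed[OF en de w] s by simp
    have gv: "g v \<noteq> 0" and gv1: "(sd_act \<sigma> \<delta> (g v) v - b) * g v = 1"
      using g[OF v] unfolding skew_prod_def by (auto split: if_splits)
    have g'w: "g' w = (h * g v) * inverse s" by (simp add: g'_def v_def)
    have nz: "g' w \<noteq> 0" using g'w gv h s by simp
    have act: "sd_act \<sigma> \<delta> (g' w) w = sd_act \<sigma> \<delta> (h * g v) v"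
    proof -
      have "sd_act \<sigma> \<delta> (h * g v) (sd_act \<sigma> \<delta> (inverse s) w) = sd_act \<sigma> \<delta> (h * g v * inverse s) w"
        by (rule act_comp[OF en de]) (use gv h s in simp_all)
      thus ?thesis using g'w v_def by metis
    qed
    have "(sd_act \<sigma> \<delta> (g' w) w - d) * g' w = ((sd_act \<sigma> \<delta> (h * g v) v - d) * (h * g v)) * inverse s"
      by (simp only: act) (simp only: g'w mult.assoc)
    also have "\<dots> = s * ((sd_act \<sigma> \<delta> (g v) v - b) * g v) * inverse s"
      unfolding d_def s_def using key_identity[OF en de h gv] by simp
    also have "\<dots> = 1" using gv1 s by simp
    finally show ?thesis using nz unfolding skew_prod_def by simp
  qed
  have A: "skew_prod \<sigma> \<delta> g' (\<lambda>z. z - d) w = 1" if w: "w \<in> sd_class \<sigma> \<delta> a" for w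
  proof -
    define u where "u = sd_act \<sigma> \<delta> (inverse h) w"
    have u: "u \<in> sd_class \<sigma> \<delta> a" unfolding u_def using class_closed[OF en de w] h by simp
    have ub: "u - b \<noteq> 0" and gu: "g (sd_act \<sigma> \<delta> (u - b) u) * (u - b) = 1"
      using g[OF u] unfolding skew_prod_def by (auto split: if_splits)
    have wu: "w = sd_act \<sigma> \<delta> h u"
      unfolding u_def using act_comp[OF en de h, of "inverse h" w] h act_one[OF en de] by simp
    have "(w - d) * h = s * (u - b)"
      using key_identity[OF en de h one_neq_zero, of u b] wu act_one[OF en de]
      by (simp add: d_def s_def)
    hence wd: "w - d = s * (u - b) * inverse h" using h
      by (metis mult.assoc mult.right_neutral right_inverse)
    have wdnz: "w - d \<noteq> 0" using wd s ub h by simp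
    have "inverse s * (w - d) = (u - b) * inverse h" using wd s by (simp add: mult.assoc[symmetric])
    hence "sd_act \<sigma> \<delta> (inverse s) (sd_act \<sigma> \<delta> (w - d) w) = sd_act \<sigma> \<delta> ((u - b) * inverse h) w"
      using act_comp[OF en de, of "inverse s" "w - d" w] s wdnz by simp
    also have "\<dots> = sd_act \<sigma> \<delta> (u - b) u"
      using act_comp[OF en de ub, of "inverse h" w] h u_def by simp
    finally have ac: "sd_act \<sigma> \<delta> (inverse s) (sd_act \<sigma> \<delta> (w - d) w) = sd_act \<sigma> \<delta> (u - b) u" .
    have "g' (sd_act \<sigma> \<delta> (w - d) w) * (w - d)
        = h * g (sd_act \<sigma> \<delta> (u - b) u) * (inverse s * (w - d))"
      unfolding g'_def ac by (simp add: mult.assoc)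
    also have "\<dots> = h * (g (sd_act \<sigma> \<delta> (u - b) u) * (u - b)) * inverse h"
      using wd s by (simp add: mult.assoc[symmetric])
    also have "\<dots> = 1" using gu h by simp
    finally show ?thesis using wdnz unfolding skew_prod_def by simp
  qed
  show ?thesis unfolding skew_invertible_on_def d_def[symmetric]
    using A B class_sub[OF en de c] by blast
qed

theorem proposition3p3:
  fixes \<sigma> \<delta> :: "'a::division_ring \<Rightarrow> 'a" and a b c d :: 'a
  assumes "ring_endo \<sigma>" and "sigma_derivation \<sigma> \<delta>"
    and "c \<in> sd_class \<sigma> \<delta> a" and "d \<in> sd_class \<sigma> \<delta> b"
    and "frac_defined_at \<sigma> \<delta> (T_minus b) [:1:] a"
  shows "frac_defined_at \<sigma> \<delta> (T_minus d) [:1:] c"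
proof -
  obtain P' Q' where mr: "minimal_rep \<sigma> \<delta> (T_minus b) [:1:] P' Q'"
    and iv: "skew_invertible_on \<sigma> \<delta> (sd_class \<sigma> \<delta> a) (\<lambda>c. skew_eval \<sigma> \<delta> P' c)"
    using assms(5) unfolding frac_defined_at_def by blast
  have "P' = T_minus b" by (rule minimal_rep_unique[OF assms(1,2) mr])
  with iv have iv': "skew_invertible_on \<sigma> \<delta> (sd_class \<sigma> \<delta> a) (\<lambda>z. z - b)"
    by (simp add: skew_eval_T_minus[OF assms(1,2)])
  obtain h where h: "h \<noteq> 0" "d = sd_act \<sigma> \<delta> h b" using assms(4) unfolding sd_class_def by blast
  have "skew_invertible_on \<sigma> \<delta> (sd_class \<sigma> \<delta> c) (\<lambda>z. z - d)"
    using transfer_invertible[OF assms(1,2,3) h(1) iv'] h(2) by simp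
  hence "skew_invertible_on \<sigma> \<delta> (sd_class \<sigma> \<delta> c) (\<lambda>z. skew_eval \<sigma> \<delta> (T_minus d) z)"
    by (simp add: skew_eval_T_minus[OF assms(1,2)])
  thus ?thesis unfolding frac_defined_at_def using minimal_rep_self[OF assms(1,2), of d] by blast
qed

end
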